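(* Let $q$ be a prime power, $m\ge 2$, $1\le k<n$, and let $0<s<m$ with $\gcd(s,m)=1$. Then: (1) For $A \in \mathbb{F}_{q^m}^{k\times (n-k)}$, there exists $X \in \mathbb{F}_{q^m}^{k\times (n-k)}$ with $\varPhi_s(X)=A$ if and only if $A\in\mathcal K$. (2) If $A \in \mathcal R_1$, then $|\varPhi_s^{-1}(A)|=0$ if $A\notin \mathcal K$, and $|\varPhi_s^{-1}(A)|=q^{k(n-k)}$ if $A\in \mathcal K$. (3) $\mathcal G(s)=\varPhi_s^{-1}(\mathcal R_1^*\cap \mathcal K)$, and $|\mathcal G(1)|=|\mathcal G(s)|=q^{k(n-k)}|\mathcal R_1^*\cap \mathcal K|$.
   Context: $\mathrm{Tr}_{\mathbb{F}_{q^m}/\mathbb{F}_q}(\alpha)=\sum_{i=0}^{m-1}\alpha^{q^i}$. $\varPhi_s:\mathbb{F}_{q^m}^{k\times (n-k)}\to\mathbb{F}_{q^m}^{k\times (n-k)}$, $X\mapsto X^{(q^s)}-X$, where $X^{(q^s)}$ raises each entry to the $q^s$-th power. $\mathcal R_1:=\{A\in \mathbb{F}_{q^m}^{k\times (n-k)} \mid \mathrm{rk}(A)=1\}$, $\mathcal R_1^*:=\{A\in (\mathbb{F}_{q^m}^* )^{k\times (n-k)} \mid \mathrm{rk}(A)=1\}$, $\mathcal K:=\left(\ker \mathrm{Tr}_{\mathbb{F}_{q^m}/\mathbb{F}_q}\right)^{k\times(n-k)}$, and $\mathcal G(s):=\{X \in (\mathbb{F}_{q^m}\setminus \mathbb{F}_q)^{k\times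 (n-k)} \mid \mathrm{rk}(X^{(q^s)}-X)=1\}$. *)

theory Defs
  imports "HOL-Analysis.Analysis" "HOL-Computational_Algebra.Primes"
begin

(* The ambient field F_{q^m} is a finite field type 'a with CARD('a) = q^m.
   Its subfield F_q is the set of fixed points of the q-Frobenius. *)
definition Fq :: "nat \<Rightarrow> 'a::{field,finite} set" where
  "Fq q = {x. x ^ q = x}"

definition trace :: "nat \<Rightarrow> nat \<Rightarrow> 'a::{field,finite} \<Rightarrow> 'a" where
  "trace q m a = (\<Sum>i<m. a ^ (q ^ i))"

(* Matrices in F_{q^m}^{k x (n-k)}: type 'a^'l^'k with CARD('k) = k, CARD('l) = n-k *)
definition Phi :: "nat \<Rightarrow> nat \<Rightarrow> 'a::{field,finite}^'l^'k \<Rightarrow> 'a^'l^'k" where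
  "Phi q s X = (\<chi> i j. (X$i$j) ^ (q ^ s) - X$i$j)"

definition R1 :: "('a::{field,finite}^'l^'k) set" where
  "R1 = {A. rank A = 1}"

definition R1star :: "('a::{field,finite}^'l^'k) set" where
  "R1star = {A. (\<forall>i j. A$i$j \<noteq> 0) \<and> rank A = 1}"

definition KK :: "nat \<Rightarrow> nat \<Rightarrow> ('a::{field,finite}^'l^'k) set" where
  "KK q m = {A. \<forall>i j. trace q m (A$i$j) = 0}"

definition GG :: "nat \<Rightarrow> nat \<Rightarrow> ('a::{field,finite}^'l^'k) set" where
  "GG q s = {X. (\<forall>i j. X$i$j \<notin> Fq q) \<and> rank (Phi q s X) = 1}"

end

theory Submission imports Defs "HOL-Computational_Algebra.Polynomial" begin

lemma of_nat_card_zero: "of_nat CARD('a::{ring_1,finite}) = (0::'a)"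
proof -
  have "(\<Sum>x\<in>UNIV. x + 1) = (\<Sum>x\<in>(UNIV::'a set). x)"
    by (rule sum.reindex_bij_witness[of _ "\<lambda>x. x - 1" "\<lambda>x. x + 1"]) auto
  thus ?thesis by (simp add: sum.distrib)
qed

lemma char_is_p:
  assumes "prime p" "e \<ge> 1" "q = p ^ e" "m \<ge> 1" "CARD('a::{field,finite}) = q ^ m"
  shows "CHAR('a) = p"
proof -
  have pc: "prime CHAR('a)"
    using prime_CHAR_semidom[where ?'a='a] finite_imp_CHAR_pos[where ?'a='a] by auto
  have "CHAR('a) dvd p ^ (e*m)"
  proof -
    have "CHAR('a) dvd CARD('a)" using of_nat_card_zero[where ?'a='a] of_nat_eq_0_iff_char_dvd by blast
    thus ?thesis using assms by (simp add: power_mult)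
  qed
  hence "CHAR('a) dvd p" using pc prime_dvd_power by blast
  thus ?thesis using pc assms(1) primes_dvd_imp_eq by blast
qed

lemma pow_card_same:
  fixes x :: "'a::{field,finite}"
  shows "x ^ card (UNIV :: 'a set) = x"
proof (cases "x = 0")
  case False
  have "x * (\<Prod>y\<in>UNIV-{0}. x * y) = x * x ^ (card (UNIV :: 'a set) - 1) * \<Prod>(UNIV-{0})"
    by (simp add: prod.distrib mult_ac)
  also have "x * x ^ (card (UNIV :: 'a set) - 1) = x ^ Suc (card (UNIV :: 'a set) - 1)"
    by (subst power_Suc) auto
  also have "Suc (card (UNIV :: 'a set) - 1) = card (UNIV :: 'a set)"
    using finite_UNIV_card_ge_0[where ?'a = 'a] by simp
  also have "(\<Prod>y\<in>UNIV-{0}. x * y) = (\<Prod>y\<in>UNIV-{0}. y)"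
    by (rule prod.reindex_bij_witness[of _ "\<lambda>y. y / x" "\<lambda>y. x * y"]) (use False in auto)
  finally show ?thesis
    by simp
qed (use finite_UNIV_card_ge_0[where ?'a = 'a] in auto)

lemma pow_iter_same:
  fixes x :: "'a::monoid_mult"
  assumes "x ^ N = x" shows "x ^ (N ^ a) = x"
proof (induction a)
  case (Suc a)
  have "x ^ (N ^ Suc a) = (x ^ N) ^ (N ^ a)" by (simp add: power_mult mult.commute)
  then show ?case using assms Suc by simp
qed simp

lemma frob_add:
  fixes x y :: "'a::{field,finite}"
  assumes "prime CHAR('a)" "q = CHAR('a) ^ e"
  shows "(x + y) ^ (q ^ j) = x ^ (q ^ j) + y ^ (q ^ j)"
  by (rule freshmans_dream'[where n="e*j"]) (use assms in \<open>auto simp: power_mult\<close>)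

lemma frob_diff:
  fixes x y :: "'a::{field,finite}"
  assumes "prime CHAR('a)" "q = CHAR('a) ^ e"
  shows "(x - y) ^ (q ^ j) = x ^ (q ^ j) - y ^ (q ^ j)"
proof -
  have "x ^ (q ^ j) = ((x - y) + y) ^ (q ^ j)" by simp
  also have "\<dots> = (x - y) ^ (q ^ j) + y ^ (q ^ j)" by (rule frob_add[OF assms])
  finally show ?thesis by (simp add: algebra_simps)
qed

lemma trace_diff:
  fixes x y :: "'a::{field,finite}"
  assumes "prime CHAR('a)" "q = CHAR('a) ^ e"
  shows "trace q m (x - y) = trace q m x - trace q m y"
  unfolding trace_def by (simp add: frob_diff[OF assms] sum_subtractf)

lemma trace_pow_q:
  fixes x :: "'a::{field,finite}"
  assumes "CARD('a) = q ^ m"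
  shows "trace q m (x ^ q) = trace q m x"
proof -
  have xm: "x ^ (q ^ m) = x" using pow_card_same[of x] assms by simp
  have "trace q m (x ^ q) = (\<Sum>i<m. x ^ (q ^ Suc i))"
    unfolding trace_def by (simp add: power_mult[symmetric] mult.commute)
  also have "\<dots> = (\<Sum>i<Suc m. x ^ (q ^ i)) - x"
    by (subst sum.lessThan_Suc_shift) simp
  also have "\<dots> = trace q m x"
    by (simp add: trace_def xm)
  finally show ?thesis .
qed

lemma trace_pow_qs:
  fixes x :: "'a::{field,finite}"
  assumes "CARD('a) = q ^ m"
  shows "trace q m (x ^ (q ^ s)) = trace q m x"
proof (induction s)
  case (Suc s)
  have "x ^ (q ^ Suc s) = (x ^ (q ^ s)) ^ q" by (simp add: power_mult[symmetric] mult.commute)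
  then show ?case using trace_pow_q[OF assms, of "x ^ (q ^ s)"] Suc by simp
qed simp

lemma trace_T:
  fixes x :: "'a::{field,finite}"
  assumes "prime CHAR('a)" "q = CHAR('a) ^ e" "CARD('a) = q ^ m"
  shows "trace q m (x ^ (q ^ s) - x) = 0"
  by (simp add: trace_diff[OF assms(1,2)] trace_pow_qs[OF assms(3)])

lemma card_ker_trace_le:
  assumes "q \<ge> 2" "m \<ge> 1"
  shows "card {x::'a::{field,finite}. trace q m x = 0} \<le> q ^ (m - 1)"
proof -
  define P :: "'a poly" where "P = (\<Sum>i<m. monom 1 (q ^ i))"
  have ev: "poly P x = trace q m x" for x
    unfolding P_def trace_def by (simp add: poly_sum poly_monom)
  have "degree P \<le> q ^ (m - 1)"
    unfolding P_def
  proof (rule degree_sum_le)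
    fix i assume "i \<in> {..<m}"
    hence "q ^ i \<le> q ^ (m - 1)" using assms by (intro power_increasing) auto
    thus "degree (monom (1::'a) (q ^ i)) \<le> q ^ (m - 1)" using degree_monom_le order_trans by blast
  qed simp
  moreover have "coeff P (q ^ (m - 1)) = 1"
  proof -
    have "coeff P (q ^ (m - 1)) = (\<Sum>i<m. if i = m - 1 then 1 else 0)"
      unfolding P_def coeff_sum coeff_monom
      using assms by (intro sum.cong refl) (simp add: power_inject_exp)
    also have "\<dots> = 1" using assms by simp
    finally show ?thesis .
  qed
  hence "P \<noteq> 0" by auto
  ultimately show ?thesis using card_poly_roots_bound[of P] ev by simp
qed

lemma card_fix_le:
  assumes "q \<ge> 2"
  shows "card {x::'a::{field,finite}. x ^ q = x} \<le> q"
proof -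
  define P :: "'a poly" where "P = monom 1 q - monom 1 1"
  have ev: "poly P x = 0 \<longleftrightarrow> x ^ q = x" for x
    unfolding P_def by (simp add: poly_monom)
  have "degree P \<le> q"
    unfolding P_def using assms
    by (meson degree_diff_le degree_monom_le le_trans one_le_numeral order_trans)
  moreover have "coeff P q = 1" unfolding P_def using assms by simp
  hence "P \<noteq> 0" by auto
  ultimately show ?thesis using card_poly_roots_bound[of P] ev by simp
qed

lemma fiber_card:
  fixes f :: "'a::{ab_group_add,finite} \<Rightarrow> 'b::ab_group_add"
  assumes add: "\<And>x y. f (x - y) = f x - f y" and "a \<in> range f"
  shows "card {x. f x = a} = card {x. f x = 0}"
proof -
  obtain x0 where x0: "f x0 = a" using assms(2) by auto
  have fp: "f (y + x0) = f y + f x0" for y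
    using add[of "y + x0" x0] by (simp add: algebra_simps)
  have "bij_betw (\<lambda>x. x - x0) {x. f x = a} {x. f x = 0}"
    by (rule bij_betw_byWitness[where f'="\<lambda>y. y + x0"]) (auto simp: add fp x0)
  thus ?thesis by (rule bij_betw_same_card)
qed

lemma card_vimage_sum:
  fixes f :: "'a::finite \<Rightarrow> 'b"
  assumes "finite B"
  shows "card (f -` B) = (\<Sum>b\<in>B. card {x. f x = b})"
proof -
  have "f -` B = (\<Union>b\<in>B. {x. f x = b})" by auto
  also have "card \<dots> = (\<Sum>b\<in>B. card {x. f x = b})"
    by (rule card_UN_disjoint) (use assms in auto)
  finally show ?thesis .
qed

lemma card_decomp:
  fixes f :: "'a::{ab_group_add,finite} \<Rightarrow> 'b::ab_group_add"
  assumes add: "\<And>x y. f (x - y) = f x - f y"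
  shows "card (UNIV::'a set) = card (range f) * card {x. f x = 0}"
proof -
  have "f -` range f = UNIV" by auto
  hence "card (UNIV::'a set) = card (f -` range f)" by simp
  also have "\<dots> = (\<Sum>b\<in>range f. card {x. f x = b})"
    by (rule card_vimage_sum) simp
  also have "\<dots> = (\<Sum>b\<in>range f. card {x. f x = 0})"
    by (intro sum.cong refl fiber_card[OF add])
  finally show ?thesis by simp
qed

lemma fix_s_eq:
  fixes x :: "'a::{field,finite}"
  assumes "CARD('a) = q ^ m" "0 < s" "gcd s m = 1"
  shows "x ^ (q ^ s) = x \<longleftrightarrow> x ^ q = x"
proof
  assume h: "x ^ (q ^ s) = x"
  obtain a b where ab: "s * a = m * b + 1" using bezout_nat[of s m] assms by auto
  have xm: "x ^ (q ^ m) = x" using pow_card_same[of x] assms by simp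
  have xa: "x ^ (q ^ (s * a)) = x" using pow_iter_same[OF h, of a] by (simp add: power_mult)
  have "x ^ (q ^ (m * b)) = x" using pow_iter_same[OF xm, of b] by (simp add: power_mult)
  moreover have "x ^ (q ^ (m * b + 1)) = (x ^ (q ^ (m * b))) ^ q"
    by (simp add: power_mult[symmetric] mult.commute)
  ultimately have "x ^ (q ^ (m * b + 1)) = x ^ q" by simp
  thus "x ^ q = x" using ab xa by simp
next
  assume h: "x ^ q = x"
  show "x ^ (q ^ s) = x" using pow_iter_same[OF h] .
qed

lemma field_facts:
  assumes pc: "prime CHAR('a::{field,finite})" and qe: "q = CHAR('a) ^ e" and "e \<ge> 1"
    and cd: "CARD('a) = q ^ m" and "m \<ge> 1" and "0 < s" and "gcd s m = 1"
  shows "card {x::'a. x ^ q = x} = q"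
    and "range (\<lambda>x::'a. x ^ (q ^ s) - x) = {x. trace q m x = 0}"
proof -
  have q2: "q \<ge> 2"
  proof -
    have "CHAR('a) \<ge> 2" using pc prime_ge_2_nat by blast
    hence "CHAR('a) ^ 1 \<le> CHAR('a) ^ e" using \<open>e \<ge> 1\<close> by (intro power_increasing) auto
    thus ?thesis using qe \<open>CHAR('a) \<ge> 2\<close> by simp
  qed
  have qm: "q ^ m = q ^ (m - 1) * q" using \<open>m \<ge> 1\<close>
    by (metis Suc_diff_le diff_Suc_1 power_Suc2)
  have gen: "card (range (\<lambda>x::'a. x ^ (q ^ t) - x)) * card {x::'a. x ^ (q ^ t) = x} = q ^ m
     \<and> range (\<lambda>x::'a. x ^ (q ^ t) - x) \<subseteq> {x. trace q m x = 0}" for t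
  proof
    let ?f = "\<lambda>x::'a. x ^ (q ^ t) - x"
    have add: "?f (x - y) = ?f x - ?f y" for x y by (simp add: frob_diff[OF pc qe])
    have "{x. ?f x = 0} = {x. x ^ (q ^ t) = x}" by auto
    thus "card (range ?f) * card {x::'a. x ^ (q ^ t) = x} = q ^ m"
      using card_decomp[OF add] cd by simp
    show "range ?f \<subseteq> {x. trace q m x = 0}"
      using trace_T[OF pc qe cd] by auto
  qed
  define R where "R = card (range (\<lambda>x::'a. x ^ q - x))"
  define K where "K = card {x::'a. x ^ q = x}"
  have RK: "R * K = q ^ m" using gen[of 1] unfolding R_def K_def by simp
  have Rle: "R \<le> q ^ (m - 1)"
    using card_mono[OF _ conjunct2[OF gen[of 1]]] card_ker_trace_le[OF q2 \<open>m \<ge> 1\<close>, where ?'a='a]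
    unfolding R_def by simp
  have Kle: "K \<le> q" using card_fix_le[OF q2] unfolding K_def by simp
  have Rpos: "R > 0" using RK q2 by (metis gr0I mult_0 power_not_zero zero_neq_numeral le_zero_eq)
  have "R * K \<le> R * q" using Kle by simp
  also have "\<dots> \<le> q ^ (m - 1) * q" using Rle by simp
  finally have eq1: "R * K = R * q" and eq2: "R * q = q ^ (m - 1) * q"
    using RK qm \<open>R * K \<le> R * q\<close> \<open>R * q \<le> q ^ (m - 1) * q\<close> by linarith+
  show Kq: "card {x::'a. x ^ q = x} = q" using eq1 Rpos unfolding K_def by simp
  have Kr: "card {x::'a. trace q m x = 0} \<le> q ^ (m - 1)"
    using card_ker_trace_le[OF q2 \<open>m \<ge> 1\<close>] by simp
  have fs: "{x::'a. x ^ (q ^ s) = x} = {x. x ^ q = x}"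
    using fix_s_eq[OF cd \<open>0 < s\<close> \<open>gcd s m = 1\<close>] by auto
  have "card (range (\<lambda>x::'a. x ^ (q ^ s) - x)) * q = q ^ (m - 1) * q"
    using conjunct1[OF gen[of s]] fs Kq qm by simp
  hence Rs: "card (range (\<lambda>x::'a. x ^ (q ^ s) - x)) = q ^ (m - 1)" using q2 by simp
  show "range (\<lambda>x::'a. x ^ (q ^ s) - x) = {x. trace q m x = 0}"
    by (rule card_seteq) (use conjunct2[OF gen[of s]] Kr Rs in auto)
qed

lemma vec_card:
  fixes S :: "'b::finite set"
  shows "card {v::'b^'n. \<forall>i. v$i \<in> S} = card S ^ CARD('n)"
proof -
  have "{v::'b^'n. \<forall>i. v$i \<in> S} = vec_lambda ` (PiE UNIV (\<lambda>_. S))"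
  proof (intro equalityI subsetI)
    fix v :: "'b^'n" assume "v \<in> {v. \<forall>i. v$i \<in> S}"
    hence "vec_nth v \<in> PiE UNIV (\<lambda>_. S)" by auto
    thus "v \<in> vec_lambda ` (PiE UNIV (\<lambda>_. S))" by (metis image_eqI vec_nth_inverse)
  qed auto
  moreover have "inj_on (vec_lambda :: ('n \<Rightarrow> 'b) \<Rightarrow> 'b^'n) (PiE UNIV (\<lambda>_. S))"
    by (auto simp: inj_on_def vec_lambda_inject)
  ultimately show ?thesis by (simp add: card_image card_PiE)
qed

lemma mat_card:
  fixes S :: "'b::finite set"
  shows "card {X::'b^'l^'k. \<forall>i j. X$i$j \<in> S} = card S ^ (CARD('k) * CARD('l))"
proof -
  have "{X::'b^'l^'k. \<forall>i j. X$i$j \<in> S} = {X. \<forall>i. X$i \<in> {v::'b^'l. \<forall>j. v$j \<in> S}}" by auto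
  hence e1: "card {X::'b^'l^'k. \<forall>i j. X$i$j \<in> S} = card {v::'b^'l. \<forall>j. v$j \<in> S} ^ CARD('k)"
    by (simp only: vec_card)
  have e2: "card {v::'b^'l. \<forall>j. v$j \<in> S} = card S ^ CARD('l)" by (rule vec_card)
  show ?thesis unfolding e1 e2 by (simp add: power_mult[symmetric] mult.commute)
qed

lemma matrix_facts:
  assumes pc: "prime CHAR('a::{field,finite})" and qe: "q = CHAR('a) ^ e" and "e \<ge> 1"
    and cd: "CARD('a) = q ^ m" and "m \<ge> 1" and "0 < s" and "gcd s m = 1"
  shows "(\<forall>A :: 'a^'l::finite^'k::finite.
            (\<exists>X. Phi q s X = A) \<longleftrightarrow> A \<in> KK q m)"
    and "\<forall>A :: 'a^'l^'k. card {X. Phi q s X = A} =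
              (if A \<in> KK q m then q ^ (CARD('k) * CARD('l)) else 0)"
    and "(GG q s :: ('a^'l^'k) set) = Phi q s -` (R1star \<inter> KK q m)"
    and "card (GG q s :: ('a^'l^'k) set) =
            q ^ (CARD('k) * CARD('l)) * card (R1star \<inter> KK q m :: ('a^'l^'k) set)"
proof -
  note ff = field_facts[OF assms]
  have fs: "x ^ (q ^ s) = x \<longleftrightarrow> x ^ q = x" for x :: 'a
    using fix_s_eq[OF cd \<open>0 < s\<close> \<open>gcd s m = 1\<close>] by auto
  have Phi_nth: "Phi q s X $ i $ j = (X$i$j) ^ (q ^ s) - X$i$j" for X :: "'a^'l^'k" and i j
    by (simp add: Phi_def)
  have P1: "(\<exists>X. Phi q s X = A) \<longleftrightarrow> A \<in> KK q m" for A :: "'a^'l^'k"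
  proof
    assume "\<exists>X. Phi q s X = A"
    then obtain X where "Phi q s X = A" by blast
    thus "A \<in> KK q m" using trace_T[OF pc qe cd] by (auto simp: KK_def Phi_nth)
  next
    assume "A \<in> KK q m"
    have h: "\<forall>i j. \<exists>x. x ^ (q ^ s) - x = A$i$j"
    proof (intro allI)
      fix i j
      have "A$i$j \<in> {x. trace q m x = 0}" using \<open>A \<in> KK q m\<close> by (simp add: KK_def)
      hence "A$i$j \<in> range (\<lambda>x::'a. x ^ (q ^ s) - x)" using ff(2) by simp
      then obtain y where "A$i$j = y ^ (q ^ s) - y" by blast
      thus "\<exists>x. x ^ (q ^ s) - x = A$i$j" by (intro exI[of _ y]) simp
    qed
    define X :: "'a^'l^'k" where "X = (\<chi> i j. SOME x. x ^ (q ^ s) - x = A$i$j)"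
    have "Phi q s X $ i $ j = A $ i $ j" for i j
    proof -
      have "X $ i $ j = (SOME x. x ^ (q ^ s) - x = A$i$j)" unfolding X_def by simp
      moreover have "(SOME x. x ^ (q ^ s) - x = A$i$j) ^ (q ^ s) - (SOME x. x ^ (q ^ s) - x = A$i$j) = A$i$j"
        using someI_ex[OF h[rule_format, of i j]] .
      ultimately show ?thesis by (simp only: Phi_nth)
    qed
    hence "Phi q s X = A" by (simp add: vec_eq_iff)
    thus "\<exists>X. Phi q s X = A" by blast
  qed
  thus "\<forall>A :: 'a^'l::finite^'k::finite. (\<exists>X. Phi q s X = A) \<longleftrightarrow> A \<in> KK q m" by blast
  have add: "Phi q s (X - Y) = Phi q s X - Phi q s Y" for X Y :: "'a^'l^'k"
    by (simp add: vec_eq_iff Phi_nth frob_diff[OF pc qe])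
  have ker: "{X. Phi q s X = 0} = {X::'a^'l^'k. \<forall>i j. X$i$j \<in> {x. x ^ q = x}}"
    by (auto simp: vec_eq_iff Phi_nth fs)
  have kc: "card {X. Phi q s X = (0::'a^'l^'k)} = q ^ (CARD('k) * CARD('l))"
    unfolding ker mat_card ff(1) ..
  have P2: "card {X. Phi q s X = A} =
              (if A \<in> KK q m then q ^ (CARD('k) * CARD('l)) else 0)" for A :: "'a^'l^'k"
  proof (cases "A \<in> KK q m")
    case True
    then obtain X where "Phi q s X = A" using P1 by blast
    hence "A \<in> range (Phi q s)" by blast
    thus ?thesis using fiber_card[OF add] kc True by simp
  next
    case False
    hence "{X. Phi q s X = A} = {}" using P1 by auto
    thus ?thesis using False by simp
  qed
  thus "\<forall>A :: 'a^'l^'k. card {X. Phi q s X = A} =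
              (if A \<in> KK q m then q ^ (CARD('k) * CARD('l)) else 0)" by blast
  show G: "(GG q s :: ('a^'l^'k) set) = Phi q s -` (R1star \<inter> KK q m)"
  proof (intro set_eqI iffI)
    fix X :: "'a^'l^'k"
    have inK: "Phi q s X \<in> KK q m" using P1 by blast
    {
      assume "X \<in> GG q s"
      thus "X \<in> Phi q s -` (R1star \<inter> KK q m)"
        using inK by (auto simp: GG_def R1star_def Fq_def Phi_nth fs)
    }
    {
      assume "X \<in> Phi q s -` (R1star \<inter> KK q m)"
      thus "X \<in> GG q s"
        by (auto simp: GG_def R1star_def Fq_def Phi_nth fs)
    }
  qed
  have "card (GG q s :: ('a^'l^'k) set) =
        (\<Sum>A\<in>(R1star \<inter> KK q m :: ('a^'l^'k) set). card {X. Phi q s X = A})"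
    unfolding G by (rule card_vimage_sum) simp
  also have "\<dots> = (\<Sum>A\<in>(R1star \<inter> KK q m :: ('a^'l^'k) set). q ^ (CARD('k) * CARD('l)))"
    by (intro sum.cong refl) (simp add: P2)
  finally show "card (GG q s :: ('a^'l^'k) set) =
            q ^ (CARD('k) * CARD('l)) * card (R1star \<inter> KK q m :: ('a^'l^'k) set)"
    by (simp add: mult.commute)
qed

theorem lemma4p8:
  fixes q m s :: nat
  assumes "\<exists>p e. prime p \<and> e \<ge> 1 \<and> q = p ^ e"
    and "m \<ge> 2"
    and "CARD('a::{field,finite}) = q ^ m"
    and "0 < s" and "s < m" and "gcd s m = 1"
  shows "(\<forall>A :: 'a^'l::finite^'k::finite.
            (\<exists>X. Phi q s X = A) \<longleftrightarrow> A \<in> KK q m)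
       \<and> (\<forall>A :: 'a^'l^'k. A \<in> R1 \<longrightarrow>
            card {X. Phi q s X = A} =
              (if A \<in> KK q m then q ^ (CARD('k) * CARD('l)) else 0))
       \<and> (GG q s :: ('a^'l^'k) set) = Phi q s -` (R1star \<inter> KK q m)
       \<and> card (GG q 1 :: ('a^'l^'k) set) = card (GG q s :: ('a^'l^'k) set)
       \<and> card (GG q s :: ('a^'l^'k) set) =
            q ^ (CARD('k) * CARD('l)) * card (R1star \<inter> KK q m :: ('a^'l^'k) set)"
proof -
  obtain p e where pe: "prime p" "e \<ge> 1" "q = p ^ e" using assms(1) by blast
  have m1: "m \<ge> 1" using assms(2) by simp
  have cp: "CHAR('a) = p" using char_is_p[OF pe m1 assms(3)] .
  have pc: "prime CHAR('a)" using cp pe by simp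
  have qe: "q = CHAR('a) ^ e" using cp pe by simp
  note M = matrix_facts[OF pc qe pe(2) assms(3) m1 assms(4) assms(6), where ?'l='l and ?'k='k]
  have g1: "gcd (1::nat) m = 1" by simp
  note M1 = matrix_facts[OF pc qe pe(2) assms(3) m1 zero_less_one g1, where ?'l='l and ?'k='k]
  show ?thesis
  proof (intro conjI)
    show "\<forall>A :: 'a^'l^'k. (\<exists>X. Phi q s X = A) \<longleftrightarrow> A \<in> KK q m" by (rule M(1))
    show "\<forall>A :: 'a^'l^'k. A \<in> R1 \<longrightarrow> card {X. Phi q s X = A} =
              (if A \<in> KK q m then q ^ (CARD('k) * CARD('l)) else 0)" using M(2) by blast
    show "(GG q s :: ('a^'l^'k) set) = Phi q s -` (R1star \<inter> KK q m)" by (rule M(3))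
    show "card (GG q 1 :: ('a^'l^'k) set) = card (GG q s :: ('a^'l^'k) set)"
      using M(4) M1(4) by simp
    show "card (GG q s :: ('a^'l^'k) set) =
            q ^ (CARD('k) * CARD('l)) * card (R1star \<inter> KK q m :: ('a^'l^'k) set)" by (rule M(4))
  qed
qed

end
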